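(* In the model described in the context (with any $n$, $k$, $r$, $p$, $\epsilon$), let $p_b:=\frac{(1-\epsilon)^2}{2}$. Then for every $\delta\in(0,1)$, $$\Pr\Big[\max_{i\notin A_1} s_{1i}\ge np_b(1+\delta)^2\Big]\le (n-k)\,e^{-np_b\delta^2/3}+2r\,e^{-r\delta^2/6}.$$
   Context: Model: $\mathbf X$ is an $n\times n$ binary matrix. Let $\{A_i\}_{i=1}^r$ be a partition of the row indices and $\{B_i\}_{i=1}^r$ a partition of the column indices, with $|A_i|=|B_i|=k$ for all $i$ (so $n=rk$). Let $\xi_{ij}$, $1\le i,j\le r$, be i.i.d. Bernoulli$(1/2)$, and set $\mathbf X(a,b)=\xi_{ij}$ whenever $(a,b)\in A_i\times B_j$. The observed matrix $\mathbf Y$ with entries in $\{0,1,*\}$ is obtained by passing each entry of $\mathbf X$ independently through a binary symmetric channel with crossover probability $p\in[0,1/2)$, and then independently erasing each entry (replacing it with $*$) with probability $\epsilon\in[0,1)$. Row 1 belongs to $A_1$. Similarity: $s_{ij}=\sum_{l=1}^n \mathbf 1\{\mathbf Y(i,l)\ne *\}\mathbf 1\{\mathbf Y(j,l)\ne *\}\mathbf 1\{\mathbf Y(i,l)=\mathbf Y(j,l)\}$. *)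

theory Defs
  imports "HOL-Probability.Probability"
begin

(* Rows/columns are indexed 1..n, blocks 1..r.  A i / B i are the row / column blocks. *)
definition block_of :: "(nat \<Rightarrow> nat set) \<Rightarrow> nat \<Rightarrow> nat \<Rightarrow> nat" where
  "block_of A r a = (THE i. i \<in> {1..r} \<and> a \<in> A i)"

definition Xmat :: "(nat \<Rightarrow> nat set) \<Rightarrow> (nat \<Rightarrow> nat set) \<Rightarrow> nat \<Rightarrow> (nat \<times> nat \<Rightarrow> bool)
    \<Rightarrow> nat \<Rightarrow> nat \<Rightarrow> bool" where
  "Xmat A B r xi a b = xi (block_of A r a, block_of B r b)"

(* Observed matrix: None = erasure symbol; flip = BSC crossover indicator; erase = erasure indicator *)
definition Ymat :: "(nat \<Rightarrow> nat set) \<Rightarrow> (nat \<Rightarrow> nat set) \<Rightarrow> nat \<Rightarrow> (nat \<times> nat \<Rightarrow> bool)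
    \<Rightarrow> (nat \<times> nat \<Rightarrow> bool) \<Rightarrow> (nat \<times> nat \<Rightarrow> bool) \<Rightarrow> nat \<Rightarrow> nat \<Rightarrow> bool option" where
  "Ymat A B r xi flip erase a b =
     (if erase (a, b) then None else Some (Xmat A B r xi a b \<noteq> flip (a, b)))"

definition simil :: "nat \<Rightarrow> (nat \<Rightarrow> nat \<Rightarrow> bool option) \<Rightarrow> nat \<Rightarrow> nat \<Rightarrow> nat" where
  "simil n Y i j = card {l \<in> {1..n}. Y i l \<noteq> None \<and> Y j l \<noteq> None \<and> Y i l = Y j l}"

(* joint law of (xi, crossover indicators, erasure indicators), all independent *)
definition model_pmf :: "nat \<Rightarrow> nat \<Rightarrow> real \<Rightarrow> real
    \<Rightarrow> ((nat \<times> nat \<Rightarrow> bool) \<times> (nat \<times> nat \<Rightarrow> bool) \<times> (nat \<times> nat \<Rightarrow> bool)) pmf" where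
  "model_pmf n r p \<epsilon> =
     pair_pmf (Pi_pmf ({1..r} \<times> {1..r}) False (\<lambda>_. bernoulli_pmf (1/2)))
       (pair_pmf (Pi_pmf ({1..n} \<times> {1..n}) False (\<lambda>_. bernoulli_pmf p))
                 (Pi_pmf ({1..n} \<times> {1..n}) False (\<lambda>_. bernoulli_pmf \<epsilon>)))"

end

theory Submission
  imports Defs
begin


lemma ln_lower_aux:
  fixes x :: real assumes "0 \<le> x"
  shows "2*x/(2+x) \<le> ln (1+x)"
proof -
  define g where "g = (\<lambda>x::real. ln (1+x) - 2*x/(2+x))"
  have "g 0 \<le> g x"
  proof (rule DERIV_nonneg_imp_nondecreasing[OF assms])
    fix y :: real assume y: "0 \<le> y" "y \<le> x"
    have "DERIV g y :> (1/(1+y) - (2*(2+y) - 2*y)/(2+y)^2)"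
      unfolding g_def using y
      by (auto intro!: derivative_eq_intros simp: power2_eq_square)
    moreover have "4/(2+y)^2 \<le> 1/(1+y)"
    proof -
      have "4*(1+y) \<le> 1*(2+y)^2" by (simp add: power2_eq_square algebra_simps)
      moreover have "(2+y)^2 > 0" "1+y > 0" using y by auto
      ultimately show ?thesis by (simp add: frac_le_eq divide_nonpos_pos)
    qed
    moreover have "(2*(2+y) - 2*y) = (4::real)" by simp
    ultimately have "DERIV g y :> (1/(1+y) - (2*(2+y) - 2*y)/(2+y)^2) \<and> 0 \<le> 1/(1+y) - (2*(2+y) - 2*y)/(2+y)^2"
      by (simp only: diff_ge_0_iff_ge simp_thms)
    thus "\<exists>d. DERIV g y :> d \<and> 0 \<le> d" by blast
  qed
  thus ?thesis by (simp add: g_def)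
qed

lemma chernoff_exponent:
  fixes x :: real assumes "0 \<le> x" "x \<le> 1"
  shows "x - (1+x) * ln (1+x) \<le> - (x^2/3)"
proof -
  have "(1+x) * (2*x/(2+x)) \<le> (1+x) * ln (1+x)"
    using ln_lower_aux[OF assms(1)] assms by (intro mult_left_mono) auto
  moreover have "x + x^2/3 \<le> (1+x) * (2*x/(2+x))"
  proof -
    have e: "(1+x)*(2*x) - (x + x^2/3) * (2+x) = x^2*(1-x)/3"
      by (simp add: algebra_simps power2_eq_square)
    have "x^2*(1-x)/3 \<ge> 0" using assms by simp
    hence "(x + x^2/3) * (2+x) \<le> (1+x)*(2*x)" using e by linarith
    thus ?thesis using assms by (simp add: field_simps)
  qed
  ultimately show ?thesis by linarith
qed

lemma exp_convex_01:
  fixes t z :: real assumes "0 \<le> z" "z \<le> 1"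
  shows "exp (t*z) \<le> 1 + z * (exp t - 1)"
proof -
  have "exp ((1 - z) *\<^sub>R 0 + z *\<^sub>R t) \<le> (1 - z) * exp 0 + z * exp t"
    using assms by (intro convex_onD[OF exp_convex]) auto
  thus ?thesis by (simp add: algebra_simps)
qed


lemma expectation_finite_type:
  fixes M :: "'b::finite pmf" and f :: "'b \<Rightarrow> real"
  shows "measure_pmf.expectation M f = (\<Sum>a\<in>UNIV. f a * pmf M a)"
  by (rule integral_measure_pmf_real) auto

lemma mgf_bound_single:
  fixes M :: "'b::finite pmf" and Z :: "'b \<Rightarrow> real"
  assumes "\<And>v. 0 \<le> Z v" "\<And>v. Z v \<le> 1" "0 \<le> t"
  shows "measure_pmf.expectation M (\<lambda>v. exp (t * Z v)) \<le> exp ((exp t - 1) * measure_pmf.expectation M Z)"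
proof -
  have "measure_pmf.expectation M (\<lambda>v. exp (t * Z v)) = (\<Sum>a\<in>UNIV. exp (t * Z a) * pmf M a)"
    by (rule expectation_finite_type)
  also have "\<dots> \<le> (\<Sum>a\<in>UNIV. (1 + Z a * (exp t - 1)) * pmf M a)"
    by (intro sum_mono mult_right_mono exp_convex_01 assms) auto
  also have "\<dots> = (\<Sum>a\<in>UNIV. pmf M a) + (exp t - 1) * (\<Sum>a\<in>UNIV. Z a * pmf M a)"
  proof -
    have "(\<Sum>a\<in>UNIV. (1 + Z a * (exp t - 1)) * pmf M a) = (\<Sum>a\<in>UNIV. pmf M a + (exp t - 1) * (Z a * pmf M a))"
      by (rule sum.cong) (auto simp: algebra_simps)
    also have "\<dots> = (\<Sum>a\<in>UNIV. pmf M a) + (exp t - 1) * (\<Sum>a\<in>UNIV. Z a * pmf M a)"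
      by (simp add: sum.distrib sum_distrib_left)
    finally show ?thesis .
  qed
  also have "(\<Sum>a\<in>UNIV. pmf M a) = 1"
    by (rule sum_pmf_eq_1) auto
  also have "(\<Sum>a\<in>UNIV. Z a * pmf M a) = measure_pmf.expectation M Z"
    by (rule expectation_finite_type[symmetric])
  also have "1 + (exp t - 1) * measure_pmf.expectation M Z \<le> exp ((exp t - 1) * measure_pmf.expectation M Z)"
    by (rule exp_ge_add_one_self)
  finally show ?thesis .
qed

lemma chernoff_Pi_pmf:
  fixes L :: "'a set" and D :: "'a \<Rightarrow> 'b::finite pmf" and Z :: "'a \<Rightarrow> 'b \<Rightarrow> real" and \<mu> \<delta> :: real
  assumes L: "finite L" and Z0: "\<And>l v. 0 \<le> Z l v" and Z1: "\<And>l v. Z l v \<le> 1"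
    and mu: "(\<Sum>l\<in>L. measure_pmf.expectation (D l) (Z l)) \<le> \<mu>" and d: "0 < \<delta>" "\<delta> \<le> 1"
  shows "measure_pmf.prob (Pi_pmf L dflt D) {g. (1+\<delta>)*\<mu> \<le> (\<Sum>l\<in>L. Z l (g l))} \<le> exp (- (\<mu> * \<delta>^2/3))"
proof -
  let ?M = "Pi_pmf L dflt D"
  define t where "t = ln (1+\<delta>)"
  have t: "t \<ge> 0" "exp t = 1+\<delta>" using d by (auto simp: t_def)
  have fin: "finite (set_pmf ?M)"
    by (rule finite_subset[OF set_Pi_pmf_subset'[OF L]]) (auto intro!: finite_PiE_dflt L)
  define S where "S = (\<lambda>g. \<Sum>l\<in>L. Z l (g l))"
  define a where "a = (1+\<delta>)*\<mu>"
  define E where "E = (\<lambda>l. measure_pmf.expectation (D l) (Z l))"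
  have E0: "E l \<ge> 0" for l unfolding E_def by (intro integral_nonneg_AE) (auto intro: Z0)
  have "0 \<le> (\<Sum>l\<in>L. E l)" by (intro sum_nonneg E0)
  hence mu0: "0 \<le> \<mu>" using mu unfolding E_def by linarith
  have "measure_pmf.prob ?M {g. a \<le> S g} = measure_pmf.expectation ?M (indicator {g. a \<le> S g})"
    by simp
  also have "\<dots> \<le> measure_pmf.expectation ?M (\<lambda>g. exp (t * (S g - a)))"
    using t by (intro integral_mono integrable_measure_pmf_finite fin) (auto simp: indicator_def)
  also have "(\<lambda>g. exp (t * (S g - a))) = (\<lambda>g. exp (- (t * a)) * (\<Prod>l\<in>L. exp (t * Z l (g l))))"
    by (rule ext) (simp add: S_def exp_sum[OF L, symmetric] sum_distrib_left exp_add[symmetric] algebra_simps)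
  also have "measure_pmf.expectation ?M \<dots> = exp (- (t * a)) * (\<Prod>l\<in>L. measure_pmf.expectation (D l) (\<lambda>v. exp (t * Z l v)))"
    by (subst integral_mult_right_zero, subst expectation_prod_Pi_pmf)
       (auto intro: integrable_measure_pmf_finite L)
  also have "\<dots> \<le> exp (- (t * a)) * (\<Prod>l\<in>L. exp (\<delta> * E l))"
  proof -
    have mg: "measure_pmf.expectation (D l) (\<lambda>v. exp (t * Z l v)) \<le> exp (\<delta> * E l)" for l
      using mgf_bound_single[of "Z l" t "D l"] t Z0 Z1 by (simp add: E_def)
    show ?thesis using t unfolding E_def
    by (intro mult_left_mono prod_mono conjI integral_nonneg_AE)
       (auto intro!: mg[unfolded E_def] Z0 Z1)
  qed
  also have "(\<Prod>l\<in>L. exp (\<delta> * E l)) = exp (\<delta> * (\<Sum>l\<in>L. E l))"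
    by (simp add: exp_sum[OF L] sum_distrib_left)
  also have "exp (- (t * a)) * \<dots> = exp (\<mu> * (\<delta> - (1+\<delta>) * ln (1+\<delta>)) + \<delta> * ((\<Sum>l\<in>L. E l) - \<mu>))"
    by (simp add: a_def t_def exp_add[symmetric] algebra_simps)
  also have "\<dots> \<le> exp (\<mu> * (- (\<delta>^2/3)))"
  proof -
    have "\<mu> * (\<delta> - (1+\<delta>) * ln (1+\<delta>)) \<le> \<mu> * (- (\<delta>^2/3))"
      using chernoff_exponent[of \<delta>] d mu0 by (intro mult_left_mono) auto
    moreover have "\<delta> * ((\<Sum>l\<in>L. E l) - \<mu>) \<le> 0"
      using mu d unfolding E_def by (intro mult_nonneg_nonpos) auto
    ultimately show ?thesis by simp
  qed
  finally show ?thesis by (simp add: S_def a_def)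
qed




lemma pmf_pair': "pmf (pair_pmf M N) z = pmf M (fst z) * pmf N (snd z)"
  by (cases z) (simp add: pmf_pair)

lemma zip_Pi_pmf:
  assumes I: "finite I"
  shows "map_pmf (\<lambda>(f,g) x. (f x, g x)) (pair_pmf (Pi_pmf I d1 D1) (Pi_pmf I d2 D2))
         = Pi_pmf I (d1,d2) (\<lambda>x. pair_pmf (D1 x) (D2 x))"
proof (rule pmf_eqI)
  fix h :: "'a \<Rightarrow> 'b \<times> 'c"
  define \<phi> where "\<phi> = (\<lambda>(f::'a\<Rightarrow>'b,g::'a\<Rightarrow>'c) x. (f x, g x))"
  have inj: "inj \<phi>" unfolding \<phi>_def inj_def by (auto simp: fun_eq_iff)
  have h: "h = \<phi> (fst \<circ> h, snd \<circ> h)" by (simp add: \<phi>_def)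
  have "pmf (map_pmf \<phi> (pair_pmf (Pi_pmf I d1 D1) (Pi_pmf I d2 D2))) h
        = pmf (pair_pmf (Pi_pmf I d1 D1) (Pi_pmf I d2 D2)) (fst \<circ> h, snd \<circ> h)"
    by (subst h, rule pmf_map_inj'[OF inj])
  also have "\<dots> = pmf (Pi_pmf I d1 D1) (fst \<circ> h) * pmf (Pi_pmf I d2 D2) (snd \<circ> h)"
    by (simp add: pmf_pair)
  also have "\<dots> = pmf (Pi_pmf I (d1,d2) (\<lambda>x. pair_pmf (D1 x) (D2 x))) h"
  proof (cases "\<forall>x. x \<notin> I \<longrightarrow> h x = (d1,d2)")
    case True
    hence "\<forall>x. x \<notin> I \<longrightarrow> fst (h x) = d1" "\<forall>x. x \<notin> I \<longrightarrow> snd (h x) = d2" by auto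
    with True show ?thesis using I by (simp add: pmf_Pi pmf_pair' prod.distrib)
  next
    case False
    then obtain x where x: "x \<notin> I" "h x \<noteq> (d1,d2)" by auto
    hence "fst (h x) \<noteq> d1 \<or> snd (h x) \<noteq> d2" by (cases "h x") auto
    thus ?thesis using I x by (auto simp: pmf_Pi)
  qed
  finally show "pmf (map_pmf (\<lambda>(f,g) x. (f x, g x)) (pair_pmf (Pi_pmf I d1 D1) (Pi_pmf I d2 D2))) h
        = pmf (Pi_pmf I (d1,d2) (\<lambda>x. pair_pmf (D1 x) (D2 x))) h" by (simp add: \<phi>_def)
qed

lemma prod_two_points:
  assumes "finite A" "a \<in> A" "b \<in> A" "a \<noteq> b"
  shows "(\<Prod>x\<in>A. if x = a then u else if x = b then v else 1) = u * (v :: 'c :: comm_monoid_mult)"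
proof -
  have "(\<Prod>x\<in>A. if x = a then u else if x = b then v else 1)
        = u * (\<Prod>x\<in>A - {a}. if x = a then u else if x = b then v else 1)"
    using assms by (subst prod.remove[of A a]) auto
  also have "(\<Prod>x\<in>A - {a}. if x = a then u else if x = b then v else 1)
        = v * (\<Prod>x\<in>A - {a} - {b}. if x = a then u else if x = b then v else 1)"
    using assms by (subst prod.remove[of "A - {a}" b]) auto
  also have "(\<Prod>x\<in>A - {a} - {b}. if x = a then u else if x = b then v else 1) = 1"
    by (intro prod.neutral) auto
  finally show ?thesis by simp
qed

lemma rows_Pi_pmf:
  fixes N a b :: nat and D :: "'b pmf"
  assumes ab: "a \<in> {1..N}" "b \<in> {1..N}" "a \<noteq> b"
  shows "map_pmf (\<lambda>\<omega> l. (\<omega> (a,l), \<omega> (b,l))) (Pi_pmf ({1..N}\<times>{1..N}) d (\<lambda>_. D))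
         = Pi_pmf {1..N} (d,d) (\<lambda>_. pair_pmf D D)"
proof (rule pmf_eqI)
  fix h :: "nat \<Rightarrow> 'b \<times> 'b"
  let ?I = "{1..N}\<times>{1..N}"
  let ?\<Omega> = "Pi_pmf ?I d (\<lambda>_. D)"
  let ?\<psi> = "\<lambda>\<omega> l. (\<omega> (a,l), \<omega> (b,l))"
  have supp: "\<omega> x = d" if "\<omega> \<in> set_pmf ?\<Omega>" "x \<notin> ?I" for \<omega> x
  proof -
    have "finite ?I" by simp
    from set_Pi_pmf_subset[OF this, of d "\<lambda>_. D"] that show ?thesis by blast
  qed
  have "pmf (map_pmf ?\<psi> ?\<Omega>) h = measure ?\<Omega> (?\<psi> -` {h})" by (simp add: pmf_map)
  also have "\<dots> = pmf (Pi_pmf {1..N} (d,d) (\<lambda>_. pair_pmf D D)) h"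
  proof (cases "\<forall>l. l \<notin> {1..N} \<longrightarrow> h l = (d,d)")
    case True
    define B where "B = (\<lambda>(x::nat,l::nat). if x = a then {fst (h l)} else if x = b then {snd (h l)} else UNIV)"
    have "?\<psi> -` {h} \<inter> set_pmf ?\<Omega> = Pi ?I B \<inter> set_pmf ?\<Omega>"
    proof (intro equalityI subsetI)
      fix \<omega> assume w: "\<omega> \<in> ?\<psi> -` {h} \<inter> set_pmf ?\<Omega>"
      hence wh: "?\<psi> \<omega> = h" and ws: "\<omega> \<in> set_pmf ?\<Omega>" by auto
      have eq: "\<omega> (a,l) = fst (h l) \<and> \<omega> (b,l) = snd (h l)" for l
      proof -
        have "h l = (\<omega> (a,l), \<omega> (b,l))" using fun_cong[OF wh, of l] by simp
        thus ?thesis by simp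
      qed
      have "\<omega> \<in> Pi ?I B"
      proof (rule Pi_I)
        fix x assume "x \<in> ?I"
        obtain u l where x: "x = (u,l)" by (cases x)
        show "\<omega> x \<in> B x" unfolding x B_def using eq[of l] by simp
      qed
      thus "\<omega> \<in> Pi ?I B \<inter> set_pmf ?\<Omega>" using ws by blast
    next
      fix \<omega> assume w: "\<omega> \<in> Pi ?I B \<inter> set_pmf ?\<Omega>"
      hence w1: "\<omega> \<in> Pi ?I B" and ws: "\<omega> \<in> set_pmf ?\<Omega>" by auto
      have eq: "\<omega> (a,l) = fst (h l) \<and> \<omega> (b,l) = snd (h l)" for l
      proof (cases "l \<in> {1..N}")
        case True
        have "(a,l) \<in> ?I" "(b,l) \<in> ?I" using ab True by auto
        hence "\<omega> (a,l) \<in> B (a,l)" "\<omega> (b,l) \<in> B (b,l)" using w1 by (auto simp only: Pi_iff)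
        thus ?thesis using ab(3) unfolding B_def by simp
      next
        case False
        have "(a,l) \<notin> ?I" "(b,l) \<notin> ?I" using False by auto
        hence "\<omega> (a,l) = d" "\<omega> (b,l) = d" using supp[OF ws] by auto
        moreover have "h l = (d,d)" using False \<open>\<forall>l. l \<notin> {1..N} \<longrightarrow> h l = (d,d)\<close> by blast
        ultimately show ?thesis by simp
      qed
      have "?\<psi> \<omega> = h"
      proof (rule ext)
        fix l show "(\<omega> (a,l), \<omega> (b,l)) = h l" using eq[of l] by (simp add: prod_eq_iff)
      qed
      thus "\<omega> \<in> ?\<psi> -` {h} \<inter> set_pmf ?\<Omega>" using ws by blast
    qed
    hence "measure ?\<Omega> (?\<psi> -` {h} \<inter> set_pmf ?\<Omega>) = measure ?\<Omega> (Pi ?I B \<inter> set_pmf ?\<Omega>)"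
      by (rule arg_cong)
    hence "measure ?\<Omega> (?\<psi> -` {h}) = measure ?\<Omega> (Pi ?I B)"
      by (simp only: measure_Int_set_pmf)
    also have "\<dots> = (\<Prod>x\<in>?I. measure D (B x))"
      by (rule measure_Pi_pmf_Pi) simp
    also have "\<dots> = (\<Prod>x\<in>{1..N}. \<Prod>l\<in>{1..N}. measure D (B (x,l)))"
      unfolding prod.cartesian_product by (rule prod.cong) auto
    also have "\<dots> = (\<Prod>l\<in>{1..N}. \<Prod>x\<in>{1..N}. measure D (B (x,l)))"
      by (rule prod.swap)
    also have "\<dots> = (\<Prod>l\<in>{1..N}. pmf D (fst (h l)) * pmf D (snd (h l)))"
    proof (rule prod.cong[OF refl])
      fix l
      have "(\<Prod>x\<in>{1..N}. measure D (B (x,l)))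
          = (\<Prod>x\<in>{1..N}. if x = a then pmf D (fst (h l)) else if x = b then pmf D (snd (h l)) else 1)"
        by (rule prod.cong) (auto simp: B_def measure_pmf_single)
      also have "\<dots> = pmf D (fst (h l)) * pmf D (snd (h l))"
        using ab by (intro prod_two_points) auto
      finally show "(\<Prod>x\<in>{1..N}. measure D (B (x,l))) = pmf D (fst (h l)) * pmf D (snd (h l))" .
    qed
    also have "\<dots> = pmf (Pi_pmf {1..N} (d,d) (\<lambda>_. pair_pmf D D)) h"
      using True by (simp add: pmf_Pi pmf_pair')
    finally show ?thesis .
  next
    case False
    then obtain l where l: "l \<notin> {1..N}" "h l \<noteq> (d,d)" by auto
    have "?\<psi> -` {h} \<inter> set_pmf ?\<Omega> = {}"
    proof (intro equalityI subsetI)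
      fix \<omega> assume w: "\<omega> \<in> ?\<psi> -` {h} \<inter> set_pmf ?\<Omega>"
      hence "h l = (\<omega> (a,l), \<omega> (b,l))" by auto
      also have "\<dots> = (d,d)" using supp[of \<omega> "(a,l)"] supp[of \<omega> "(b,l)"] w l by auto
      finally show "\<omega> \<in> {}" using l by auto
    qed auto
    hence "measure ?\<Omega> (?\<psi> -` {h} \<inter> set_pmf ?\<Omega>) = 0" by (simp only: measure_empty)
    hence "measure ?\<Omega> (?\<psi> -` {h}) = 0" by (simp only: measure_Int_set_pmf)
    thus ?thesis using l by (subst pmf_Pi_outside) auto
  qed
  finally show "pmf (map_pmf ?\<psi> ?\<Omega>) h = pmf (Pi_pmf {1..N} (d,d) (\<lambda>_. pair_pmf D D)) h" .
qed



lemma block_of_eq: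
  assumes "disjoint_family_on A {1..r}" "j \<in> {1..r}" "a \<in> A j"
  shows "block_of A r a = j"
  unfolding block_of_def
proof (rule the_equality)
  show "j \<in> {1..r} \<and> a \<in> A j" using assms by simp
  fix i assume "i \<in> {1..r} \<and> a \<in> A i"
  thus "i = j" using assms unfolding disjoint_family_on_def by blast
qed

lemma block_of_mem:
  assumes "disjoint_family_on A {1..r}" "(\<Union>i\<in>{1..r}. A i) = {1..n}" "a \<in> {1..n}"
  shows "block_of A r a \<in> {1..r} \<and> a \<in> A (block_of A r a)"
proof -
  obtain j where "j \<in> {1..r}" "a \<in> A j" using assms(2,3) by blast
  thus ?thesis using block_of_eq[OF assms(1)] by simp
qed

lemma pair_pmf_cond_bound:
  assumes "\<And>x. measure_pmf.prob N {y. (x,y) \<in> S} \<le> c"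
  shows "measure_pmf.prob (pair_pmf M N) S \<le> c"
proof -
  have c0: "0 \<le> c" using assms[of undefined] measure_nonneg[of N] by (meson order_trans)
  have "emeasure (measure_pmf (pair_pmf M N)) S
        = (\<integral>\<^sup>+x. emeasure (measure_pmf (map_pmf (Pair x) N)) S \<partial>measure_pmf M)"
    by (simp add: pair_pmf_def map_pmf_def)
  also have "\<dots> = (\<integral>\<^sup>+x. ennreal (measure_pmf.prob N {y. (x,y) \<in> S}) \<partial>measure_pmf M)"
    by (intro nn_integral_cong) (simp add: measure_pmf.emeasure_eq_measure vimage_def)
  also have "\<dots> \<le> (\<integral>\<^sup>+x. ennreal c \<partial>measure_pmf M)"
    by (intro nn_integral_mono ennreal_leI assms)
  also have "\<dots> = ennreal c" by (simp add: measure_pmf.emeasure_space_1)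
  finally show ?thesis using c0 by (simp add: measure_pmf.emeasure_eq_measure)
qed

lemma sum_UNIV_pair:
  "(\<Sum>z\<in>(UNIV::('a::finite \<times> 'b::finite) set). F z) = (\<Sum>x\<in>UNIV. \<Sum>y\<in>UNIV. F (x,y))"
proof -
  have "(\<Sum>z\<in>(UNIV::('a \<times> 'b) set). F z) = (\<Sum>z\<in>UNIV \<times> UNIV. F z)" by simp
  also have "\<dots> = (\<Sum>x\<in>UNIV. \<Sum>y\<in>UNIV. F (x,y))"
    by (subst sum.cartesian_product) (simp add: case_prod_unfold)
  finally show ?thesis .
qed

lemma E_Zs:
  fixes p \<epsilon> :: real and x1 x2 :: bool
  assumes "0 \<le> p" "p \<le> 1" "0 \<le> \<epsilon>" "\<epsilon> \<le> 1"
  shows "measure_pmf.expectation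
     (pair_pmf (pair_pmf (bernoulli_pmf p) (bernoulli_pmf \<epsilon>)) (pair_pmf (bernoulli_pmf p) (bernoulli_pmf \<epsilon>)))
     (\<lambda>((f1,e1),(f2,e2)). if \<not>e1 \<and> \<not>e2 \<and> (x1 \<noteq> f1) = (x2 \<noteq> f2) then 1 else 0 :: real)
   = (1-\<epsilon>)^2 * (if x1 = x2 then p^2 + (1-p)^2 else 2*p*(1-p))"
  using assms
  by (cases x1; cases x2)
     (simp_all add: expectation_finite_type sum_UNIV_pair UNIV_bool pmf_pair algebra_simps power2_eq_square)

lemma E_Zx:
  "measure_pmf.expectation (pair_pmf (bernoulli_pmf (1/2)) (bernoulli_pmf (1/2)))
     (\<lambda>z. if fst z = snd z then 1 else 0 :: real) = 1/2"
  by (simp add: expectation_finite_type sum_UNIV_pair UNIV_bool pmf_pair)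

lemma card_real_sum:
  assumes "finite A"
  shows "real (card {x\<in>A. P x}) = (\<Sum>x\<in>A. if P x then 1 else 0)"
proof -
  have "real (card {x\<in>A. P x}) = (\<Sum>x\<in>{x\<in>A. P x}. 1)" by simp
  also have "\<dots> = (\<Sum>x\<in>A. if P x then 1 else 0)" using assms by (subst sum.inter_filter) auto
  finally show ?thesis .
qed


theorem lemma2:
  fixes n k r :: nat and p \<epsilon> \<delta> :: real and A B :: "nat \<Rightarrow> nat set"
  assumes "n = r * k"
    and "0 \<le> p" and "p < 1/2" and "0 \<le> \<epsilon>" and "\<epsilon> < 1"
    and "disjoint_family_on A {1..r}" and "(\<Union>i\<in>{1..r}. A i) = {1..n}"
    and "\<forall>i\<in>{1..r}. card (A i) = k"
    and "disjoint_family_on B {1..r}" and "(\<Union>i\<in>{1..r}. B i) = {1..n}"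
    and "\<forall>i\<in>{1..r}. card (B i) = k"
    and "1 \<le> r" and "1 \<in> A 1"
    and "0 < \<delta>" and "\<delta> < 1"
  shows "measure_pmf.prob (model_pmf n r p \<epsilon>)
           {(xi, fl, er). \<exists>i\<in>{1..n} - A 1.
              real (simil n (Ymat A B r xi fl er) 1 i) \<ge> real n * ((1 - \<epsilon>)^2 / 2) * (1 + \<delta>)^2}
         \<le> real (n - k) * exp (- real n * ((1 - \<epsilon>)^2 / 2) * \<delta>^2 / 3)
           + 2 * real r * exp (- real r * \<delta>^2 / 6)"
proof -
  define pb where "pb = (1-\<epsilon>)^2/2"
  define T where "T = real n * pb * (1+\<delta>)^2"
  define bA where "bA = block_of A r"
  define bB where "bB = block_of B r"
  define m where "m = (\<lambda>b (\<xi>::nat\<times>nat\<Rightarrow>bool). card {j\<in>{1..r}. \<xi>(1,j) = \<xi>(b,j)})"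
  define bad where "bad = (\<lambda>b \<xi>. (1+\<delta>)*(real r/2) \<le> real (m b \<xi>))"
  define \<Xi> where "\<Xi> = Pi_pmf ({1..r}\<times>{1..r}) False (\<lambda>_. bernoulli_pmf (1/2))"
  define Fl where "Fl = Pi_pmf ({1..n}\<times>{1..n}) False (\<lambda>_. bernoulli_pmf p)"
  define Er where "Er = Pi_pmf ({1..n}\<times>{1..n}) False (\<lambda>_. bernoulli_pmf \<epsilon>)"
  define W where "W = pair_pmf Fl Er"
  have model: "model_pmf n r p \<epsilon> = pair_pmf \<Xi> W"
    by (simp add: model_pmf_def \<Xi>_def W_def Fl_def Er_def)
  define E where "E = {(xi, fl, er). \<exists>i\<in>{1..n} - A 1.
              real (simil n (Ymat A B r xi fl er) 1 i) \<ge> real n * ((1 - \<epsilon>)^2 / 2) * (1 + \<delta>)^2}"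
  define Bad :: "((nat\<times>nat\<Rightarrow>bool) \<times> (nat\<times>nat\<Rightarrow>bool) \<times> (nat\<times>nat\<Rightarrow>bool)) set"
    where "Bad = {x. \<exists>b\<in>{2..r}. bad b (fst x)}"
  define G where "G = (\<lambda>i. {(\<xi>, fl, er). \<not> bad (bA i) \<xi> \<and> T \<le> real (simil n (Ymat A B r \<xi> fl er) 1 i)})"
  define c1 where "c1 = exp (- real n * ((1 - \<epsilon>)^2 / 2) * \<delta>^2 / 3)"
  define c2 where "c2 = exp (- real r * \<delta>^2 / 6)"

  have bA1: "bA 1 = 1" using block_of_eq[OF assms(6), of 1 1] assms(12,13) by (simp add: bA_def)
  have bAi: "bA i \<in> {2..r}" if "i \<in> {1..n} - A 1" for i
  proof -
    have *: "bA i \<in> {1..r} \<and> i \<in> A (bA i)" using block_of_mem[OF assms(6,7)] that by (simp add: bA_def)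
    moreover have "bA i \<noteq> 1" using * that by auto
    ultimately show ?thesis by auto
  qed
  have bBl: "bB l \<in> {1..r} \<and> l \<in> B (bB l)" if "l \<in> {1..n}" for l
    using block_of_mem[OF assms(9,10)] that by (simp add: bB_def)

  have sub: "E \<subseteq> Bad \<union> (\<Union>i\<in>{1..n} - A 1. G i)"
  proof
    fix x assume "x \<in> E"
    then obtain \<xi> fl er i where x: "x = (\<xi>, fl, er)" "i \<in> {1..n} - A 1"
        "T \<le> real (simil n (Ymat A B r \<xi> fl er) 1 i)"
      unfolding E_def T_def pb_def by auto
    show "x \<in> Bad \<union> (\<Union>i\<in>{1..n} - A 1. G i)"
    proof (cases "bad (bA i) \<xi>")
      case True thus ?thesis using bAi[OF x(2)] x(1) unfolding Bad_def by auto
    next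
      case False thus ?thesis using x unfolding G_def by auto
    qed
  qed

  have badprob: "measure_pmf.prob \<Xi> {\<xi>. bad b \<xi>} \<le> c2" if b: "b \<in> {2..r}" for b
  proof -
    define Zx where "Zx = (\<lambda>(j::nat) (z::bool\<times>bool). if fst z = snd z then 1 else (0::real))"
    define \<psi> where "\<psi> = (\<lambda>(\<omega>::nat\<times>nat\<Rightarrow>bool) l. (\<omega> (1,l), \<omega> (b,l)))"
    have mreal: "real (m b \<xi>) = (\<Sum>j\<in>{1..r}. Zx j (\<psi> \<xi> j))" for \<xi>
      unfolding m_def \<psi>_def Zx_def by (subst card_real_sum) simp_all
    have "{\<xi>. bad b \<xi>} = \<psi> -` {g. (1+\<delta>)*(real r/2) \<le> (\<Sum>j\<in>{1..r}. Zx j (g j))}"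
      by (auto simp: bad_def mreal)
    hence "measure_pmf.prob \<Xi> {\<xi>. bad b \<xi>}
        = measure_pmf.prob (map_pmf \<psi> \<Xi>) {g. (1+\<delta>)*(real r/2) \<le> (\<Sum>j\<in>{1..r}. Zx j (g j))}"
      by simp
    also have "map_pmf \<psi> \<Xi> = Pi_pmf {1..r} (False,False) (\<lambda>_. pair_pmf (bernoulli_pmf (1/2)) (bernoulli_pmf (1/2)))"
      unfolding \<psi>_def \<Xi>_def using b by (intro rows_Pi_pmf) auto
    also have "measure_pmf.prob \<dots> {g. (1+\<delta>)*(real r/2) \<le> (\<Sum>j\<in>{1..r}. Zx j (g j))} \<le> exp (- (real r/2 * \<delta>^2/3))"
      by (rule chernoff_Pi_pmf) (use assms(14,15) in \<open>auto simp: Zx_def E_Zx\<close>)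
    also have "- (real r/2 * \<delta>^2/3) = - real r * \<delta>^2 / 6" by simp
    finally show ?thesis by (simp add: c2_def)
  qed

  have "measure_pmf.prob (pair_pmf \<Xi> W) Bad = measure_pmf.prob \<Xi> {\<xi>. \<exists>b\<in>{2..r}. bad b \<xi>}"
  proof -
    have "measure_pmf.prob \<Xi> {\<xi>. \<exists>b\<in>{2..r}. bad b \<xi>}
          = measure_pmf.prob (map_pmf fst (pair_pmf \<Xi> W)) {\<xi>. \<exists>b\<in>{2..r}. bad b \<xi>}"
      by (simp add: map_fst_pair_pmf)
    also have "\<dots> = measure_pmf.prob (pair_pmf \<Xi> W) Bad" by (simp add: Bad_def vimage_def)
    finally show ?thesis ..
  qed
  also have "measure_pmf.prob \<Xi> {\<xi>. \<exists>b\<in>{2..r}. bad b \<xi>} \<le> (\<Sum>b\<in>{2..r}. measure_pmf.prob \<Xi> {\<xi>. bad b \<xi>})"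
  proof -
    have "{\<xi>. \<exists>b\<in>{2..r}. bad b \<xi>} = (\<Union>b\<in>{2..r}. {\<xi>. bad b \<xi>})" by auto
    thus ?thesis by (simp add: measure_pmf.finite_measure_subadditive_finite)
  qed
  also have "\<dots> \<le> (\<Sum>b\<in>{2..r}. c2)" by (intro sum_mono badprob)
  also have "\<dots> = real (r - 1) * c2" by simp
  finally have Badp: "measure_pmf.prob (pair_pmf \<Xi> W) Bad \<le> real (r-1) * c2" .

  have Gprob: "measure_pmf.prob (pair_pmf \<Xi> W) (G i) \<le> c1" if i: "i \<in> {1..n} - A 1" for i
  proof (rule pair_pmf_cond_bound)
    fix \<xi> :: "nat\<times>nat \<Rightarrow> bool"
    show "measure_pmf.prob W {w. (\<xi>, w) \<in> G i} \<le> c1"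
    proof (cases "bad (bA i) \<xi>")
      case True
      hence "{w. (\<xi>, w) \<in> G i} = {}" by (auto simp: G_def)
      hence "measure_pmf.prob W {w. (\<xi>, w) \<in> G i} = 0" by (simp only: measure_empty)
      thus ?thesis by (simp add: c1_def)
    next
      case False
      define b where "b = bA i"
      have b: "b \<in> {2..r}" using bAi[OF i] by (simp add: b_def)
      define x1 where "x1 = (\<lambda>l. Xmat A B r \<xi> 1 l)"
      define x2 where "x2 = (\<lambda>l. Xmat A B r \<xi> i l)"
      define Zs where "Zs = (\<lambda>l ((f1,e1),(f2,e2)). if \<not>e1 \<and> \<not>e2 \<and> (x1 l \<noteq> f1) = (x2 l \<noteq> f2) then 1 else (0::real))"
      define \<Phi> where "\<Phi> = (\<lambda>w::(nat\<times>nat\<Rightarrow>bool)\<times>(nat\<times>nat\<Rightarrow>bool).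
                         \<lambda>l. ((fst w (1,l), snd w (1,l)), (fst w (i,l), snd w (i,l))))"
      define \<mu> where "\<mu> = real n * pb * (1+\<delta>)"
      define D where "D = pair_pmf (pair_pmf (bernoulli_pmf p) (bernoulli_pmf \<epsilon>)) (pair_pmf (bernoulli_pmf p) (bernoulli_pmf \<epsilon>))"
      have i1: "i \<in> {1..n}" "i \<noteq> 1" using i assms(13) by auto
      have T\<mu>: "(1+\<delta>)*\<mu> = T" by (simp add: \<mu>_def T_def power2_eq_square algebra_simps)
      have sim: "real (simil n (Ymat A B r \<xi> fl er) 1 i) = (\<Sum>l\<in>{1..n}. Zs l (\<Phi> (fl,er) l))" for fl er
        unfolding simil_def
        by (subst card_real_sum) (auto intro!: sum.cong simp: Zs_def \<Phi>_def Ymat_def x1_def x2_def)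
      have set_eq: "{w. (\<xi>, w) \<in> G i} = \<Phi> -` {g. (1+\<delta>)*\<mu> \<le> (\<Sum>l\<in>{1..n}. Zs l (g l))}"
      proof (rule set_eqI)
        fix w :: "(nat\<times>nat\<Rightarrow>bool)\<times>(nat\<times>nat\<Rightarrow>bool)"
        obtain fl er where w: "w = (fl, er)" by (cases w)
        show "w \<in> {w. (\<xi>, w) \<in> G i} \<longleftrightarrow> w \<in> \<Phi> -` {g. (1+\<delta>)*\<mu> \<le> (\<Sum>l\<in>{1..n}. Zs l (g l))}"
          using sim[of fl er] False T\<mu> unfolding w G_def by auto
      qed
      have map\<Phi>: "map_pmf \<Phi> W = Pi_pmf {1..n} ((False,False),(False,False)) (\<lambda>_. D)"
      proof -
        have "map_pmf \<Phi> W = map_pmf (\<lambda>\<omega> l. (\<omega> (1,l), \<omega> (i,l))) (map_pmf (\<lambda>(f,g) x. (f x, g x)) W)"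
          by (simp add: map_pmf_comp \<Phi>_def case_prod_beta)
        also have "map_pmf (\<lambda>(f,g) x. (f x, g x)) W
           = Pi_pmf ({1..n}\<times>{1..n}) (False,False) (\<lambda>_. pair_pmf (bernoulli_pmf p) (bernoulli_pmf \<epsilon>))"
          unfolding W_def Fl_def Er_def by (rule zip_Pi_pmf) simp
        also have "map_pmf (\<lambda>\<omega> l. (\<omega> (1,l), \<omega> (i,l))) \<dots> = Pi_pmf {1..n} ((False,False),(False,False)) (\<lambda>_. D)"
          unfolding D_def using i1 by (intro rows_Pi_pmf) auto
        finally show ?thesis .
      qed
      have Esum: "(\<Sum>l\<in>{1..n}. measure_pmf.expectation D (Zs l)) \<le> \<mu>"
      proof -
        define q where "q = p^2 + (1-p)^2"
        define q' where "q' = 2*p*(1-p)"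
        have EZ: "measure_pmf.expectation D (Zs l) = (1-\<epsilon>)^2 * (if x1 l = x2 l then q else q')" for l
          unfolding D_def Zs_def q_def q'_def using E_Zs[of p \<epsilon> "x1 l" "x2 l"] assms(2,3,4,5) by simp
        define cnt where "cnt = card {l\<in>{1..n}. x1 l = x2 l}"
        have sumeq: "(\<Sum>l\<in>{1..n}. (if x1 l = x2 l then q else q')) = real n * q' + (q - q') * real cnt"
        proof -
          have "(\<Sum>l\<in>{1..n}. (if x1 l = x2 l then q else q'))
              = (\<Sum>l\<in>{1..n}. q' + (q - q') * (if x1 l = x2 l then 1 else 0))"
            by (rule sum.cong) auto
          also have "\<dots> = real n * q' + (q - q') * (\<Sum>l\<in>{1..n}. if x1 l = x2 l then 1 else 0)"
            by (simp add: sum.distrib sum_distrib_left)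
          also have "(\<Sum>l\<in>{1..n}. if x1 l = x2 l then 1 else 0) = real cnt"
            unfolding cnt_def by (rule card_real_sum[symmetric]) simp
          finally show ?thesis .
        qed
        have x12: "x1 l = \<xi>(1, bB l)" "x2 l = \<xi>(b, bB l)" for l
          using bA1 by (simp_all add: x1_def x2_def Xmat_def b_def bA_def bB_def)
        have cntk: "cnt = k * m b \<xi>"
        proof -
          define J where "J = {j\<in>{1..r}. \<xi>(1,j) = \<xi>(b,j)}"
          have "{l\<in>{1..n}. x1 l = x2 l} = (\<Union>j\<in>J. B j)"
          proof (intro equalityI subsetI)
            fix l assume "l \<in> {l\<in>{1..n}. x1 l = x2 l}"
            hence l: "l \<in> {1..n}" "\<xi>(1, bB l) = \<xi>(b, bB l)" by (auto simp: x12)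
            thus "l \<in> (\<Union>j\<in>J. B j)" using bBl[OF l(1)] unfolding J_def by blast
          next
            fix l assume "l \<in> (\<Union>j\<in>J. B j)"
            then obtain j where j: "j \<in> J" "l \<in> B j" by blast
            have lj: "l \<in> {1..n}" using j assms(10) unfolding J_def by blast
            have "bB l = j" using block_of_eq[OF assms(9), of j l] j unfolding J_def bB_def by auto
            thus "l \<in> {l\<in>{1..n}. x1 l = x2 l}" using lj j unfolding J_def by (auto simp: x12)
          qed
          hence "cnt = card (\<Union>j\<in>J. B j)" by (simp add: cnt_def)
          also have "\<dots> = (\<Sum>j\<in>J. card (B j))"
          proof (rule card_UN_disjoint)
            show "finite J" by (simp add: J_def)
            show "\<forall>j\<in>J. finite (B j)"
            proof
              fix j assume "j \<in> J"
              hence "B j \<subseteq> {1..n}" using assms(10) unfolding J_def by blast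
              thus "finite (B j)" by (rule finite_subset) simp
            qed
            show "\<forall>j\<in>J. \<forall>j'\<in>J. j \<noteq> j' \<longrightarrow> B j \<inter> B j' = {}"
              using assms(9) unfolding J_def disjoint_family_on_def by auto
          qed
          also have "\<dots> = (\<Sum>j\<in>J. k)" using assms(11) by (intro sum.cong) (auto simp: J_def)
          also have "\<dots> = k * m b \<xi>" by (simp add: J_def m_def)
          finally show ?thesis .
        qed
        have cntb: "real cnt \<le> (1+\<delta>) * real n / 2"
        proof -
          have "real (m b \<xi>) < (1+\<delta>)*(real r/2)" using False by (simp add: bad_def b_def)
          hence "real k * real (m b \<xi>) \<le> real k * ((1+\<delta>)*(real r/2))" by (intro mult_left_mono) auto
          thus ?thesis using assms(1) by (simp add: cntk algebra_simps)
        qed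
        have qq: "q - q' = (1 - 2*p)^2" "q = 1 - q'" by (simp_all add: q_def q'_def power2_eq_square algebra_simps)
        have q'0: "q' \<ge> 0" using assms(2,3) by (simp add: q'_def)
        have "(\<Sum>l\<in>{1..n}. measure_pmf.expectation D (Zs l))
            = (\<Sum>l\<in>{1..n}. (1-\<epsilon>)^2 * (if x1 l = x2 l then q else q'))"
          by (rule sum.cong) (simp_all add: EZ)
        also have "\<dots> = (1-\<epsilon>)^2 * (real n * q' + (q - q') * real cnt)"
          by (simp only: sum_distrib_left[symmetric] sumeq)
        also have "\<dots> \<le> (1-\<epsilon>)^2 * ((1+\<delta>) * real n / 2)"
        proof (rule mult_left_mono)
          have "(q - q') * real cnt \<le> (q - q') * ((1+\<delta>) * real n / 2)"
            using cntb by (intro mult_left_mono) (auto simp: qq(1))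
          moreover have "real n * q' + (q - q') * ((1+\<delta>) * real n / 2) = (1+\<delta>) * real n / 2 - \<delta> * real n * q'"
            unfolding qq(2) by (simp add: field_simps)
          moreover have "\<delta> * real n * q' \<ge> 0" using q'0 assms(14) by simp
          ultimately show "real n * q' + (q - q') * real cnt \<le> (1+\<delta>) * real n / 2" by linarith
        qed simp
        also have "\<dots> = \<mu>" by (simp add: \<mu>_def pb_def algebra_simps)
        finally show ?thesis .
      qed
      have "measure_pmf.prob W {w. (\<xi>, w) \<in> G i}
          = measure_pmf.prob (map_pmf \<Phi> W) {g. (1+\<delta>)*\<mu> \<le> (\<Sum>l\<in>{1..n}. Zs l (g l))}"
        by (simp add: set_eq)
      also have "\<dots> \<le> exp (- (\<mu> * \<delta>^2/3))"
        unfolding map\<Phi> by (rule chernoff_Pi_pmf) (use Esum assms(14,15) in \<open>auto simp: Zs_def split: prod.splits\<close>)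
      also have "\<dots> \<le> c1"
      proof -
        have np: "0 \<le> real n * pb" by (simp add: pb_def)
        hence "0 \<le> real n * pb * \<delta>" using assms(14) by simp
        hence "real n * pb \<le> \<mu>" unfolding \<mu>_def by (simp add: algebra_simps)
        hence "real n * pb * \<delta>^2 \<le> \<mu> * \<delta>^2"
          by (intro mult_right_mono) auto
        thus ?thesis by (simp add: c1_def pb_def mult_ac)
      qed
      finally show ?thesis .
    qed
  qed

  have "measure_pmf.prob (model_pmf n r p \<epsilon>) E \<le> measure_pmf.prob (pair_pmf \<Xi> W) (Bad \<union> (\<Union>i\<in>{1..n} - A 1. G i))"
    unfolding model by (intro measure_pmf.finite_measure_mono sub) simp
  also have "\<dots> \<le> measure_pmf.prob (pair_pmf \<Xi> W) Bad + measure_pmf.prob (pair_pmf \<Xi> W) (\<Union>i\<in>{1..n} - A 1. G i)"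
    by (intro measure_Un_le) simp_all
  also have "measure_pmf.prob (pair_pmf \<Xi> W) (\<Union>i\<in>{1..n} - A 1. G i) \<le> (\<Sum>i\<in>{1..n} - A 1. measure_pmf.prob (pair_pmf \<Xi> W) (G i))"
    by (intro measure_pmf.finite_measure_subadditive_finite) simp_all
  also have "\<dots> \<le> (\<Sum>i\<in>{1..n} - A 1. c1)" by (intro sum_mono Gprob)
  also have "\<dots> = real (n - k) * c1"
  proof -
    have "A 1 \<subseteq> {1..n}" using assms(7,12) by auto
    hence "card ({1..n} - A 1) = n - k" using assms(8,12) by (simp add: card_Diff_subset finite_subset)
    thus ?thesis by simp
  qed
  finally have "measure_pmf.prob (model_pmf n r p \<epsilon>) E \<le> real (r-1) * c2 + real (n - k) * c1"
    using Badp by linarith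
  also have "real (r-1) * c2 \<le> 2 * real r * c2" by (simp add: c2_def)
  finally show ?thesis unfolding E_def c1_def c2_def by linarith
qed

end
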